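(* Let $A$ be a Lie conformal algebra and $M$ an $A$-module with a commutative associative product such that $\partial^M$ and all $a_\lambda$ act by derivations. For every $\xi\in\tilde\Gamma_1(A,M)$, the contraction $\iota_\xi$ is an odd derivation of degree $-1$ of the superalgebra $(\tilde\Gamma^\bullet(A,M),\wedge)$: $\iota_\xi(\tilde\alpha\wedge\tilde\beta)=\iota_\xi(\tilde\alpha)\wedge\tilde\beta+(-1)^h\tilde\alpha\wedge\iota_\xi(\tilde\beta)$ for $\tilde\alpha\in\tilde\Gamma^h$, $\tilde\beta\in\tilde\Gamma^k$.
   Context: $\mathbb F$ field of characteristic 0. $\tilde\Gamma^k$: $\mathbb F$-linear $\tilde\gamma:A^{\otimes k}\to\mathbb F[\lambda_1..\lambda_k]\otimes M$ with $\tilde\gamma(..,\partial a_i,..)=-\lambda_i\tilde\gamma(..)$ and skew-symmetric under simultaneous permutation of $a_i$ and $\lambda_i$ ($\tilde\Gamma^0=M$). Exterior product: $(\tilde\alpha\wedge\tilde\beta)_{\lambda_1..\lambda_{h+k}}(a_1..a_{h+k})=\sum_{\sigma\in S_{h+k}}\frac{\mathrm{sign}\sigma}{h!k!}\tilde\alpha_{\lambda_{\sigma(1)}..\lambda_{\sigma(h)}}(a_{\sigma(1)}..a_{\sigma(h)})\tilde\beta_{\lambda_{\sigma(h+1)}..\lambda_{\sigma(h+k)}}(a_{\sigma(h+1)}..a_{\sigma(h+k)})$. $\tilde\Gamma_1$: quotient of $A\otimes\mathrm{Hom}_{\mathbb F}(\mathbb F[\lambda],M)$ by $\partial a\otimes\phi=-a\otimes\lambda^*\phi$,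 $(\lambda^*\phi)(f)=\phi(\lambda f)$. For $\xi$ represented by $a_1\otimes\phi$: $(\iota_\xi\tilde\gamma)_{\lambda_2..\lambda_k}(a_2..a_k)=\phi^\mu(\tilde\gamma_{\lambda_1,..,\lambda_k}(a_1,..,a_k))$, where $\phi^\mu(f(\lambda_1)\otimes m)=\phi(f)m$ coefficientwise in $\lambda_2,..,\lambda_k$; $\iota_\xi=0$ on $\tilde\Gamma^0$. *)

theory Defs
  imports Complex_Main "HOL-Library.Poly_Mapping" "HOL-Combinatorics.Permutations"
begin

text \<open>The field F is a type 'f of class field_char_0.
  F[lambda] (x) V is encoded as nat =>0 V (coefficient of lambda^n).
  F[lambda_0 .. lambda_(k-1)] (x) M is encoded as (nat =>0 nat) =>0 M
  (coefficient of the monomial with exponent vector e); variables are 0-indexed.\<close>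

type_synonym 'v mpoly = "(nat \<Rightarrow>\<^sub>0 nat) \<Rightarrow>\<^sub>0 'v"

definition lie_conformal_algebra ::
  "('f::field_char_0 \<Rightarrow> 'a::ab_group_add \<Rightarrow> 'a) \<Rightarrow> ('a \<Rightarrow> 'a) \<Rightarrow> ('a \<Rightarrow> 'a \<Rightarrow> (nat \<Rightarrow>\<^sub>0 'a)) \<Rightarrow> bool"
where
  "lie_conformal_algebra sA DA br \<longleftrightarrow>
     Vector_Spaces.vector_space sA \<and> Vector_Spaces.linear sA sA DA \<and>
     (\<forall>b n. Vector_Spaces.linear sA sA (\<lambda>a. Poly_Mapping.lookup (br a b) n)) \<and>
     (\<forall>a n. Vector_Spaces.linear sA sA (\<lambda>b. Poly_Mapping.lookup (br a b) n)) \<and>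
     \<comment> \<open>sesquilinearity: [d a_lambda b] = - lambda [a_lambda b], [a_lambda d b] = (d + lambda)[a_lambda b]\<close>
     (\<forall>a b n. Poly_Mapping.lookup (br (DA a) b) n = - (if n = 0 then 0 else Poly_Mapping.lookup (br a b) (n - 1))) \<and>
     (\<forall>a b n. Poly_Mapping.lookup (br a (DA b)) n =
        DA (Poly_Mapping.lookup (br a b) n) + (if n = 0 then 0 else Poly_Mapping.lookup (br a b) (n - 1))) \<and>
     \<comment> \<open>skew-symmetry: [b_lambda a] = - [a_(-lambda-d) b]\<close>
     (\<forall>a b i. Poly_Mapping.lookup (br b a) i =
        - (\<Sum>q\<in>Poly_Mapping.keys (br a b). if i \<le> q
             then sA ((-1) ^ q * of_nat (q choose i)) ((DA ^^ (q - i)) (Poly_Mapping.lookup (br a b) q))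
             else 0)) \<and>
     \<comment> \<open>Jacobi: [a_lambda [b_mu c]] - [b_mu [a_lambda c]] = [[a_lambda b]_(lambda+mu) c],
         compared coefficientwise at lambda^i mu^j\<close>
     (\<forall>a b c i j.
        Poly_Mapping.lookup (br a (Poly_Mapping.lookup (br b c) j)) i - Poly_Mapping.lookup (br b (Poly_Mapping.lookup (br a c) i)) j =
        (\<Sum>p\<le>i. sA (of_nat ((i - p + j) choose (i - p)))
                    (Poly_Mapping.lookup (br (Poly_Mapping.lookup (br a b) p) c) (i - p + j))))"

definition lca_module ::
  "('f::field_char_0 \<Rightarrow> 'a::ab_group_add \<Rightarrow> 'a) \<Rightarrow> ('a \<Rightarrow> 'a) \<Rightarrow> ('a \<Rightarrow> 'a \<Rightarrow> (nat \<Rightarrow>\<^sub>0 'a)) \<Rightarrow>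
   ('f \<Rightarrow> 'm::ab_group_add \<Rightarrow> 'm) \<Rightarrow> ('m \<Rightarrow> 'm) \<Rightarrow> ('a \<Rightarrow> 'm \<Rightarrow> (nat \<Rightarrow>\<^sub>0 'm)) \<Rightarrow> bool"
where
  "lca_module sA DA br sM DM act \<longleftrightarrow>
     Vector_Spaces.vector_space sM \<and> Vector_Spaces.linear sM sM DM \<and>
     (\<forall>m n. Vector_Spaces.linear sA sM (\<lambda>a. Poly_Mapping.lookup (act a m) n)) \<and>
     (\<forall>a n. Vector_Spaces.linear sM sM (\<lambda>m. Poly_Mapping.lookup (act a m) n)) \<and>
     (\<forall>a m n. Poly_Mapping.lookup (act (DA a) m) n = - (if n = 0 then 0 else Poly_Mapping.lookup (act a m) (n - 1))) \<and>
     (\<forall>a m n. Poly_Mapping.lookup (act a (DM m)) n =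
        DM (Poly_Mapping.lookup (act a m) n) + (if n = 0 then 0 else Poly_Mapping.lookup (act a m) (n - 1))) \<and>
     \<comment> \<open>a_lambda (b_mu m) - b_mu (a_lambda m) = [a_lambda b]_(lambda+mu) m, coefficient of lambda^i mu^j\<close>
     (\<forall>a b m i j.
        Poly_Mapping.lookup (act a (Poly_Mapping.lookup (act b m) j)) i - Poly_Mapping.lookup (act b (Poly_Mapping.lookup (act a m) i)) j =
        (\<Sum>p\<le>i. sM (of_nat ((i - p + j) choose (i - p)))
                    (Poly_Mapping.lookup (act (Poly_Mapping.lookup (br a b) p) m) (i - p + j))))"

text \<open>The commutative associative product of M (the ring multiplication of the type 'm)
  is F-bilinear, and d^M and all a_lambda act on it by derivations.\<close>

definition derivation_product ::
  "('f::field_char_0 \<Rightarrow> 'm::comm_ring \<Rightarrow> 'm) \<Rightarrow> ('m \<Rightarrow> 'm) \<Rightarrow> ('a \<Rightarrow> 'm \<Rightarrow> (nat \<Rightarrow>\<^sub>0 'm)) \<Rightarrow> bool"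
where
  "derivation_product sM DM act \<longleftrightarrow>
     (\<forall>c x y. sM c (x * y) = sM c x * y) \<and>
     (\<forall>x y. DM (x * y) = DM x * y + x * DM y) \<and>
     (\<forall>a x y n. Poly_Mapping.lookup (act a (x * y)) n = Poly_Mapping.lookup (act a x) n * y + x * Poly_Mapping.lookup (act a y) n)"

definition psmul :: "('f \<Rightarrow> 'm::zero \<Rightarrow> 'm) \<Rightarrow> 'f \<Rightarrow> 'm mpoly \<Rightarrow> 'm mpoly" where
  "psmul sM c P = Poly_Mapping.map (sM c) P"

definition lam_mul :: "nat \<Rightarrow> 'm::comm_monoid_add mpoly \<Rightarrow> 'm mpoly" where
  "lam_mul i P = (\<Sum>e\<in>Poly_Mapping.keys P. Poly_Mapping.single (e + Poly_Mapping.single i 1) (Poly_Mapping.lookup P e))"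

definition ren_exp :: "(nat \<Rightarrow> nat) \<Rightarrow> (nat \<Rightarrow>\<^sub>0 nat) \<Rightarrow> (nat \<Rightarrow>\<^sub>0 nat)" where
  "ren_exp \<rho> e = (\<Sum>i\<in>Poly_Mapping.keys e. Poly_Mapping.single (\<rho> i) (Poly_Mapping.lookup e i))"

definition ren :: "(nat \<Rightarrow> nat) \<Rightarrow> 'm::comm_monoid_add mpoly \<Rightarrow> 'm mpoly" where
  "ren \<rho> P = (\<Sum>e\<in>Poly_Mapping.keys P. Poly_Mapping.single (ren_exp \<rho> e) (Poly_Mapping.lookup P e))"

text \<open>A cochain is a function on argument lists; as an element of tilde Gamma^k only its
  values on lists of length k matter.\<close>

definition Gamma ::
  "('f::field_char_0 \<Rightarrow> 'a::ab_group_add \<Rightarrow> 'a) \<Rightarrow> ('a \<Rightarrow> 'a) \<Rightarrow> ('f \<Rightarrow> 'm::ab_group_add \<Rightarrow> 'm) \<Rightarrow>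
   nat \<Rightarrow> ('a list \<Rightarrow> 'm mpoly) set"
where
  "Gamma sA DA sM k = {\<gamma>.
     \<comment> \<open>values in F[lambda_0..lambda_(k-1)] (x) M\<close>
     (\<forall>as. length as = k \<longrightarrow> (\<forall>e\<in>Poly_Mapping.keys (\<gamma> as). Poly_Mapping.keys e \<subseteq> {0..<k})) \<and>
     \<comment> \<open>F-linear in each argument\<close>
     (\<forall>as i e. length as = k \<longrightarrow> i < k \<longrightarrow>
        Vector_Spaces.linear sA sM (\<lambda>x. Poly_Mapping.lookup (\<gamma> (as[i := x])) e)) \<and>
     \<comment> \<open>gamma(.., d a_i, ..) = - lambda_i gamma(..)\<close>
     (\<forall>as i. length as = k \<longrightarrow> i < k \<longrightarrow>
        \<gamma> (as[i := DA (as ! i)]) = - lam_mul i (\<gamma> as)) \<and>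
     \<comment> \<open>skew-symmetry under simultaneous permutation of the a_i and lambda_i\<close>
     (\<forall>as \<sigma>. length as = k \<longrightarrow> \<sigma> permutes {0..<k} \<longrightarrow>
        ren \<sigma> (\<gamma> (List.map (\<lambda>i. as ! \<sigma> i) [0..<k])) = psmul sM (of_int (sign \<sigma>)) (\<gamma> as))}"

definition wedge ::
  "('f::field_char_0 \<Rightarrow> 'm::comm_ring \<Rightarrow> 'm) \<Rightarrow> nat \<Rightarrow> nat \<Rightarrow>
   ('a list \<Rightarrow> 'm mpoly) \<Rightarrow> ('a list \<Rightarrow> 'm mpoly) \<Rightarrow> 'a list \<Rightarrow> 'm mpoly"
where
  "wedge sM h k \<alpha> \<beta> as =
     (\<Sum>\<sigma>\<in>{\<sigma>. \<sigma> permutes {0..<h + k}}.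
        psmul sM (of_int (sign \<sigma>) / (fact h * fact k))
          (ren \<sigma> (\<alpha> (List.map (\<lambda>i. as ! \<sigma> i) [0..<h])) *
           ren (\<lambda>j. \<sigma> (h + j)) (\<beta> (List.map (\<lambda>j. as ! \<sigma> (h + j)) [0..<k]))))"

text \<open>An element of tilde Gamma_1 is represented by a finite sum of simple tensors a (x) phi,
  given as a list of pairs; phi in Hom_F(F[lambda],M) is given by its values phi(lambda^n).\<close>

definition shift_down :: "(nat \<Rightarrow>\<^sub>0 nat) \<Rightarrow> (nat \<Rightarrow>\<^sub>0 nat)" where
  "shift_down e = (\<Sum>i\<in>Poly_Mapping.keys e - {0}. Poly_Mapping.single (i - 1) (Poly_Mapping.lookup e i))"

text \<open>phi^mu applied in the variable lambda_0: f(lambda_0) m |-> phi(f) m\<close>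
definition contract :: "(nat \<Rightarrow> 'm::comm_ring) \<Rightarrow> 'm mpoly \<Rightarrow> 'm mpoly" where
  "contract \<phi> P = (\<Sum>e\<in>Poly_Mapping.keys P. Poly_Mapping.single (shift_down e) (\<phi> (Poly_Mapping.lookup e 0) * Poly_Mapping.lookup P e))"

definition iota ::
  "nat \<Rightarrow> ('a \<times> (nat \<Rightarrow> 'm::comm_ring)) list \<Rightarrow> ('a list \<Rightarrow> 'm mpoly) \<Rightarrow> 'a list \<Rightarrow> 'm mpoly"
where
  "iota k \<xi> \<gamma> as = (if k = 0 then 0
     else sum_list (List.map (\<lambda>(a, \<phi>). contract \<phi> (\<gamma> (a # as))) \<xi>))"

end

theory Submission
  imports Defs
begin

definition LM :: "('k \<Rightarrow> 'l) \<Rightarrow> ('k \<Rightarrow> 'v::zero \<Rightarrow> 'w::comm_monoid_add) \<Rightarrow> ('k \<Rightarrow>\<^sub>0 'v) \<Rightarrow> ('l \<Rightarrow>\<^sub>0 'w)" where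
  "LM g f P = (\<Sum>e\<in>Poly_Mapping.keys P. Poly_Mapping.single (g e) (f e (Poly_Mapping.lookup P e)))"

lemma LM_superset:
  assumes "finite S" "Poly_Mapping.keys P \<subseteq> S" "\<And>e. f e 0 = 0"
  shows "LM g f P = (\<Sum>e\<in>S. Poly_Mapping.single (g e) (f e (Poly_Mapping.lookup P e)))"
  unfolding LM_def
  by (rule sum.mono_neutral_left) (use assms in \<open>auto simp: in_keys_iff\<close>)

lemma LM_add:
  assumes "\<And>e. f e 0 = 0" "\<And>e x y. f e (x + y) = f e x + f e y"
  shows "LM g f (P + Q) = LM g f P + LM g f Q"
proof -
  let ?S = "Poly_Mapping.keys P \<union> Poly_Mapping.keys Q"
  have "LM g f (P + Q) = (\<Sum>e\<in>?S. Poly_Mapping.single (g e) (f e (Poly_Mapping.lookup (P+Q) e)))"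
    by (rule LM_superset) (use assms keys_add[of P Q] in auto)
  also have "\<dots> = (\<Sum>e\<in>?S. Poly_Mapping.single (g e) (f e (Poly_Mapping.lookup P e)))
      + (\<Sum>e\<in>?S. Poly_Mapping.single (g e) (f e (Poly_Mapping.lookup Q e)))"
    by (simp add: lookup_add assms single_add sum.distrib)
  also have "\<dots> = LM g f P + LM g f Q"
    by (subst (1 2) LM_superset[where S="?S"]) (use assms in auto)
  finally show ?thesis .
qed

lemma LM_zero[simp]: "LM g f 0 = 0"
  by (simp add: LM_def)

lemma LM_single:
  assumes "\<And>e. f e 0 = 0"
  shows "LM g f (Poly_Mapping.single e x) = Poly_Mapping.single (g e) (f e x)"
  by (subst LM_superset[where S="{e}"]) (use assms in auto)

lemma LM_sum:
  assumes "\<And>e. f e 0 = 0" "\<And>e x y. f e (x + y) = f e x + f e y"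
  shows "LM g f (\<Sum>i\<in>I. X i) = (\<Sum>i\<in>I. LM g f (X i))"
  by (induction I rule: infinite_finite_induct) (auto simp: LM_add assms)

lemma pm_expand: "P = (\<Sum>e\<in>Poly_Mapping.keys P. Poly_Mapping.single e (Poly_Mapping.lookup P e))"
  by (rule poly_mapping_eqI) (simp add: lookup_sum lookup_single when_def in_keys_iff)

lemma additive_eq:
  fixes F G :: "('k \<Rightarrow>\<^sub>0 'v::comm_monoid_add) \<Rightarrow> 'w::comm_monoid_add"
  assumes "\<And>P Q. F (P + Q) = F P + F Q" "F 0 = 0"
    "\<And>P Q. G (P + Q) = G P + G Q" "G 0 = 0"
    "\<And>e x. F (Poly_Mapping.single e x) = G (Poly_Mapping.single e x)"
  shows "F P = G P"
proof -
  have sF: "F (\<Sum>i\<in>I. X i) = (\<Sum>i\<in>I. F (X i))" for I and X :: "'k \<Rightarrow> _"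
    by (induction I rule: infinite_finite_induct) (auto simp: assms)
  have sG: "G (\<Sum>i\<in>I. X i) = (\<Sum>i\<in>I. G (X i))" for I and X :: "'k \<Rightarrow> _"
    by (induction I rule: infinite_finite_induct) (auto simp: assms)
  show ?thesis
    by (subst (1 2) pm_expand) (simp add: sF sG assms(5))
qed

lemma ren_exp_LM: "ren_exp \<rho> = LM \<rho> (\<lambda>_ x. x)"
  by (rule ext) (simp add: ren_exp_def LM_def)
lemma ren_LM: "ren \<rho> = LM (ren_exp \<rho>) (\<lambda>_ x. x)"
  by (rule ext) (simp add: ren_def LM_def)
lemma contract_LM: "contract \<phi> = LM shift_down (\<lambda>e x. \<phi> (Poly_Mapping.lookup e 0) * x)"
  by (rule ext) (simp add: contract_def LM_def)
lemma shift_down_LM: "shift_down = LM (\<lambda>i. i - 1) (\<lambda>i x. if i = 0 then 0 else x)"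
proof (rule ext)
  fix e :: "nat \<Rightarrow>\<^sub>0 nat"
  show "shift_down e = LM (\<lambda>i. i - 1) (\<lambda>i x. if i = 0 then 0 else x) e"
    unfolding shift_down_def LM_def
    by (rule sum.mono_neutral_cong_left) auto
qed

lemma ren_exp_add: "ren_exp \<rho> (e + f) = ren_exp \<rho> e + ren_exp \<rho> f"
  unfolding ren_exp_LM by (rule LM_add) auto
lemma ren_exp_single[simp]: "ren_exp \<rho> (Poly_Mapping.single i n) = Poly_Mapping.single (\<rho> i) n"
  unfolding ren_exp_LM by (rule LM_single) auto
lemma ren_exp_zero[simp]: "ren_exp \<rho> 0 = 0"
  unfolding ren_exp_LM by simp
lemma shift_down_add: "shift_down (e + f) = shift_down e + shift_down f"
  unfolding shift_down_LM by (rule LM_add) auto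
lemma shift_down_single[simp]: "shift_down (Poly_Mapping.single i n) = (if i = 0 then 0 else Poly_Mapping.single (i - 1) n)"
  unfolding shift_down_LM by (subst LM_single) auto
lemma shift_down_zero[simp]: "shift_down 0 = 0"
  unfolding shift_down_LM by simp

lemma ren_add: "ren \<rho> (P + Q) = ren \<rho> P + ren \<rho> Q"
  unfolding ren_LM by (rule LM_add) auto
lemma ren_single[simp]: "ren \<rho> (Poly_Mapping.single e x) = Poly_Mapping.single (ren_exp \<rho> e) x"
  unfolding ren_LM by (rule LM_single) auto
lemma ren_zero[simp]: "ren \<rho> 0 = 0"
  unfolding ren_LM by simp
lemma ren_sum: "ren \<rho> (\<Sum>i\<in>I. X i) = (\<Sum>i\<in>I. ren \<rho> (X i))"
  unfolding ren_LM by (rule LM_sum) auto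

lemma contract_add: "contract \<phi> (P + Q) = contract \<phi> P + contract \<phi> Q"
  unfolding contract_LM by (rule LM_add) (auto simp: distrib_left)
lemma contract_single[simp]: "contract \<phi> (Poly_Mapping.single e x) = Poly_Mapping.single (shift_down e) (\<phi> (Poly_Mapping.lookup e 0) * x)"
  unfolding contract_LM by (rule LM_single) auto
lemma contract_zero[simp]: "contract \<phi> 0 = 0"
  unfolding contract_LM by simp
lemma contract_sum: "contract \<phi> (\<Sum>i\<in>I. X i) = (\<Sum>i\<in>I. contract \<phi> (X i))"
  unfolding contract_LM by (rule LM_sum) (auto simp: distrib_left)

lemma ren_exp_comp: "ren_exp \<sigma> (ren_exp \<rho> e) = ren_exp (\<sigma> \<circ> \<rho>) e"
  by (rule additive_eq[where F="\<lambda>e. ren_exp \<sigma> (ren_exp \<rho> e)"]) (auto simp: ren_exp_add)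

lemma ren_comp: "ren \<sigma> (ren \<rho> P) = ren (\<sigma> \<circ> \<rho>) P"
  by (rule additive_eq[where F="\<lambda>P. ren \<sigma> (ren \<rho> P)"]) (auto simp: ren_add ren_exp_comp comp_def)

lemma ren_mult: "ren \<rho> (P * Q) = ren \<rho> P * ren \<rho> (Q :: 'm::comm_ring mpoly)"
proof (rule additive_eq[where F="\<lambda>P. ren \<rho> (P * Q)"])
  fix e x
  show "ren \<rho> (Poly_Mapping.single e x * Q) = ren \<rho> (Poly_Mapping.single e x) * ren \<rho> Q"
    by (rule additive_eq[where F="\<lambda>Q. ren \<rho> (Poly_Mapping.single e x * Q)"])
       (auto simp: ren_add distrib_left mult_single ren_exp_add)
qed (auto simp: ren_add distrib_right)

lemma ren_exp_cong: "(\<And>i. i \<in> Poly_Mapping.keys e \<Longrightarrow> \<rho> i = \<rho>' i) \<Longrightarrow> ren_exp \<rho> e = ren_exp \<rho>' e"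
  unfolding ren_exp_def by (rule sum.cong) auto

lemma ren_cong: "(\<And>e i. e \<in> Poly_Mapping.keys P \<Longrightarrow> i \<in> Poly_Mapping.keys e \<Longrightarrow> \<rho> i = \<rho>' i) \<Longrightarrow> ren \<rho> P = ren \<rho>' P"
  unfolding ren_def by (rule sum.cong) (auto intro!: arg_cong2[where f=Poly_Mapping.single] ren_exp_cong)

lemma X1_lookup:
  assumes "\<rho> 0 = 0" "\<And>j. \<rho> (Suc j) = Suc (\<tau> j)"
  shows "Poly_Mapping.lookup (ren_exp \<rho> e) 0 = Poly_Mapping.lookup e 0"
proof (rule additive_eq[where F="\<lambda>e. Poly_Mapping.lookup (ren_exp \<rho> e) 0"])
  fix i n show "Poly_Mapping.lookup (ren_exp \<rho> (Poly_Mapping.single i n)) 0 = Poly_Mapping.lookup (Poly_Mapping.single i n) 0"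
    using assms by (cases i) (auto simp: lookup_single)
qed (auto simp: ren_exp_add lookup_add)

lemma X1_shift:
  assumes "\<rho> 0 = 0" "\<And>j. \<rho> (Suc j) = Suc (\<tau> j)"
  shows "shift_down (ren_exp \<rho> e) = ren_exp \<tau> (shift_down e)"
proof (rule additive_eq[where F="\<lambda>e. shift_down (ren_exp \<rho> e)"])
  fix i n show "shift_down (ren_exp \<rho> (Poly_Mapping.single i n)) = ren_exp \<tau> (shift_down (Poly_Mapping.single i n))"
    using assms by (cases i) auto
qed (auto simp: ren_exp_add shift_down_add)

lemma X2_lookup: "Poly_Mapping.lookup (ren_exp (\<lambda>j. Suc (\<tau> j)) e) 0 = 0"
proof (rule additive_eq[where F="\<lambda>e. Poly_Mapping.lookup (ren_exp (\<lambda>j. Suc (\<tau> j)) e) 0"])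
  fix i n show "Poly_Mapping.lookup (ren_exp (\<lambda>j. Suc (\<tau> j)) (Poly_Mapping.single i n)) 0 = (\<lambda>e. 0) (Poly_Mapping.single i n)"
    by (auto simp: lookup_single)
qed (auto simp: ren_exp_add lookup_add)

lemma X2_shift: "shift_down (ren_exp (\<lambda>j. Suc (\<tau> j)) e) = ren_exp \<tau> e"
proof (rule additive_eq[where F="\<lambda>e. shift_down (ren_exp (\<lambda>j. Suc (\<tau> j)) e)"])
qed (auto simp: ren_exp_add shift_down_add)

lemma contract_ren:
  assumes "\<rho> 0 = 0" "\<And>j. \<rho> (Suc j) = Suc (\<tau> j)"
  shows "contract \<phi> (ren \<rho> P) = ren \<tau> (contract \<phi> P)"
  by (rule additive_eq[where F="\<lambda>P. contract \<phi> (ren \<rho> P)"])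
     (auto simp: ren_add contract_add X1_lookup[OF assms] X1_shift[OF assms])

lemma contract_mult_ren:
  "contract \<phi> (X * ren (\<lambda>j. Suc (\<tau> j)) Q) = contract \<phi> X * ren \<tau> (Q :: 'm::comm_ring mpoly)"
proof (rule additive_eq[where F="\<lambda>X. contract \<phi> (X * ren (\<lambda>j. Suc (\<tau> j)) Q)"])
  fix e x
  show "contract \<phi> (Poly_Mapping.single e x * ren (\<lambda>j. Suc (\<tau> j)) Q) = contract \<phi> (Poly_Mapping.single e x) * ren \<tau> Q"
    by (rule additive_eq[where F="\<lambda>Q. contract \<phi> (Poly_Mapping.single e x * ren (\<lambda>j. Suc (\<tau> j)) Q)"])
       (auto simp: ren_add contract_add distrib_left mult_single shift_down_add X2_shift X2_lookup lookup_add mult.assoc)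
qed (auto simp: contract_add distrib_right)

lemma contract_mult_ren':
  "contract \<phi> (ren (\<lambda>j. Suc (\<tau> j)) Q * X) = ren \<tau> Q * contract \<phi> (X :: 'm::comm_ring mpoly)"
  using contract_mult_ren[of \<phi> X \<tau> Q] by (simp add: mult.commute)

lemma lookup_pmap: "f 0 = 0 \<Longrightarrow> Poly_Mapping.lookup (Poly_Mapping.map f p) k = f (Poly_Mapping.lookup p k)"
  by transfer (auto simp: when_def)


context
  fixes sM :: "'f::field \<Rightarrow> 'm::comm_ring \<Rightarrow> 'm"
  assumes VS: "Vector_Spaces.vector_space sM"
begin
interpretation V: vector_space sM by (rule VS)

lemma psmul_lookup: "Poly_Mapping.lookup (psmul sM c P) e = sM c (Poly_Mapping.lookup P e)"
  unfolding psmul_def by (rule lookup_pmap) simp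
lemma psmul_zero_left[simp]: "psmul sM 0 P = 0"
  by (rule poly_mapping_eqI) (simp add: psmul_lookup)

lemma psmul_add: "psmul sM c (P + Q) = psmul sM c P + psmul sM c Q"
  by (rule poly_mapping_eqI) (simp add: psmul_lookup lookup_add V.scale_right_distrib)
lemma psmul_add_left: "psmul sM (c + d) P = psmul sM c P + psmul sM d P"
  by (rule poly_mapping_eqI) (simp add: psmul_lookup lookup_add V.scale_left_distrib)
lemma psmul_zero[simp]: "psmul sM c 0 = 0"
  by (rule poly_mapping_eqI) (simp add: psmul_lookup)
lemma psmul_psmul: "psmul sM c (psmul sM d P) = psmul sM (c * d) P"
  by (rule poly_mapping_eqI) (simp add: psmul_lookup V.scale_scale)
lemma psmul_one: "psmul sM 1 P = P"
  by (rule poly_mapping_eqI) (simp add: psmul_lookup)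
lemma psmul_neg: "psmul sM (- c) P = - psmul sM c P"
  by (rule poly_mapping_eqI) (simp add: psmul_lookup V.scale_minus_left)
lemma psmul_uminus: "psmul sM c (- P) = - psmul sM c P"
  by (rule poly_mapping_eqI) (simp add: psmul_lookup V.scale_minus_right)
lemma psmul_single[simp]: "psmul sM c (Poly_Mapping.single e x) = Poly_Mapping.single e (sM c x)"
  by (rule poly_mapping_eqI) (simp add: psmul_lookup lookup_single when_def)
lemma psmul_sum: "psmul sM c (\<Sum>i\<in>I. X i) = (\<Sum>i\<in>I. psmul sM c (X i))"
  by (induction I rule: infinite_finite_induct) (auto simp: psmul_add)
lemma psmul_sum_left: "psmul sM (\<Sum>i\<in>I. c i) P = (\<Sum>i\<in>I. psmul sM (c i) P)"
  by (induction I rule: infinite_finite_induct) (auto simp: psmul_add_left)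

lemma ren_psmul: "ren \<rho> (psmul sM c P) = psmul sM c (ren \<rho> P)"
  by (rule additive_eq[where F="\<lambda>P. ren \<rho> (psmul sM c P)"]) (auto simp: ren_add psmul_add)

context
  assumes MUL: "\<And>c x y. sM c (x * y) = sM c x * y"
begin

lemma sM_mul2: "sM c (x * y) = x * sM c y"
  using MUL[of c y x] by (simp add: mult.commute)

lemma contract_psmul: "contract \<phi> (psmul sM c P) = psmul sM c (contract \<phi> P)"
  by (rule additive_eq[where F="\<lambda>P. contract \<phi> (psmul sM c P)"]) (auto simp: contract_add psmul_add sM_mul2)

lemma psmul_mult: "psmul sM c P * Q = psmul sM c (P * Q)"
proof (rule additive_eq[where F="\<lambda>P. psmul sM c P * Q"])
  fix e x
  show "psmul sM c (Poly_Mapping.single e x) * Q = psmul sM c (Poly_Mapping.single e x * Q)"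
    by (rule additive_eq[where F="\<lambda>Q. psmul sM c (Poly_Mapping.single e x) * Q"])
       (auto simp: psmul_add distrib_left mult_single MUL)
qed (auto simp: psmul_add distrib_right)

end
end


definition shiftp :: "(nat \<Rightarrow> nat) \<Rightarrow> nat \<Rightarrow> nat" where
  "shiftp \<tau> i = (case i of 0 \<Rightarrow> 0 | Suc j \<Rightarrow> Suc (\<tau> j))"

definition unshift :: "nat \<Rightarrow> (nat \<Rightarrow> nat) \<Rightarrow> nat \<Rightarrow> nat" where
  "unshift m \<sigma> x = (if x \<in> {0..<m} then \<sigma> (Suc x) - 1 else x)"

definition cyc :: "nat \<Rightarrow> nat \<Rightarrow> nat" where
  "cyc h i = (if i < h then Suc i else if i = h then 0 else i)"

lemma shiftp_0[simp]: "shiftp \<tau> 0 = 0" and shiftp_Suc[simp]: "shiftp \<tau> (Suc j) = Suc (\<tau> j)"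
  by (simp_all add: shiftp_def)

lemma shiftp_perm:
  assumes "\<tau> permutes {0..<m}"
  shows "shiftp \<tau> permutes {0..<Suc m}" "sign (shiftp \<tau>) = sign \<tau>"
proof -
  have L: "permutes_bij_finite \<tau> {0..<m} {Suc 0..<Suc m} Suc (\<lambda>x. x - 1)"
    unfolding permutes_bij_finite_def permutes_bij_finite_axioms_def permutes_bij_def
    using assms by (auto simp: bij_betw_def image_Suc_atLeastLessThan)
  note P = permutes_bij.permutes_p'[OF permutes_bij_finite.axioms(1)[OF L]] permutes_bij_finite.sign_p'[OF L]
  have eq: "(\<lambda>x. if x \<in> {Suc 0..<Suc m} then Suc (\<tau> (x - 1)) else x) = shiftp \<tau>"
  proof
    fix x show "(if x \<in> {Suc 0..<Suc m} then Suc (\<tau> (x - 1)) else x) = shiftp \<tau> x"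
      using permutes_not_in[OF assms] by (cases x) auto
  qed
  show "shiftp \<tau> permutes {0..<Suc m}"
    using P(1) eq by (auto intro: permutes_subset)
  show "sign (shiftp \<tau>) = sign \<tau>"
    using P(2) eq by simp
qed

lemma unshift_perm:
  assumes "\<sigma> permutes {0..<Suc m}" "\<sigma> 0 = 0"
  shows "unshift m \<sigma> permutes {0..<m}"
proof -
  have p1: "\<sigma> permutes {Suc 0..<Suc m}"
    using assms unfolding permutes_def by (metis atLeastLessThan_iff le_0_eq not_less_eq_eq)
  have L: "permutes_bij \<sigma> {Suc 0..<Suc m} {0..<m} (\<lambda>x. x - 1) Suc"
    unfolding permutes_bij_def
    using p1 by (auto simp: bij_betw_def image_def inj_on_def intro!: bexI[of _ "Suc _"])
  have "(\<lambda>x. if x \<in> {0..<m} then \<sigma> (Suc x) - 1 else x) = unshift m \<sigma>"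
    by (auto simp: unshift_def)
  then show ?thesis using permutes_bij.permutes_p'[OF L] by metis
qed

lemma shiftp_unshift:
  assumes "\<sigma> permutes {0..<Suc m}" "\<sigma> 0 = 0"
  shows "shiftp (unshift m \<sigma>) = \<sigma>"
proof
  fix x show "shiftp (unshift m \<sigma>) x = \<sigma> x"
  proof (cases x)
    case (Suc y)
    show ?thesis
    proof (cases "y < m")
      case True
      have "\<sigma> (Suc y) \<noteq> 0" using assms permutes_inj[OF assms(1)] by (metis inj_eq nat.distinct(1))
      then show ?thesis using True Suc by (simp add: unshift_def)
    next
      case False
      then show ?thesis using Suc permutes_not_in[OF assms(1)] by (simp add: unshift_def)
    qed
  qed (use assms in auto)
qed

lemma unshift_shiftp:
  assumes "\<tau> permutes {0..<m}"
  shows "unshift m (shiftp \<tau>) = \<tau>"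
  using permutes_not_in[OF assms] by (auto simp: unshift_def fun_eq_iff)

lemma cyc_0: "cyc 0 = id" by (auto simp: cyc_def fun_eq_iff)
lemma cyc_Suc: "cyc (Suc h) = Transposition.transpose 0 (Suc h) \<circ> cyc h"
  by (auto simp: cyc_def fun_eq_iff Transposition.transpose_def)

lemma cyc_perm: "cyc h permutes {0..<Suc h}" "sign (cyc h) = (-1) ^ h"
proof (induction h)
  case 0
  { case 1 show ?case by (simp add: cyc_0 permutes_id flip: id_def) }
  { case 2 show ?case by (simp add: cyc_0) }
next
  case (Suc h)
  have pc: "cyc h permutes {0..<Suc (Suc h)}" using Suc(1) by (rule permutes_subset) auto
  { case 1 show ?case unfolding cyc_Suc by (rule permutes_compose[OF pc]) (rule permutes_swap_id; simp) }
  { case 2 have "permutation (cyc h)" by (rule permutes_imp_permutation[OF _ Suc(1)]) simp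
    then show ?case unfolding cyc_Suc using Suc(2)
      by (subst sign_compose) (simp_all add: permutation_swap_id sign_swap_id) }
qed

lemma G_keys: "\<alpha> \<in> Gamma sA DA sM h \<Longrightarrow> length bs = h \<Longrightarrow> e \<in> Poly_Mapping.keys (\<alpha> bs) \<Longrightarrow> Poly_Mapping.keys e \<subseteq> {0..<h}"
  unfolding Gamma_def mem_Collect_eq by (elim conjE) (erule allE[of _ bs], simp)

lemma G_skew: "\<alpha> \<in> Gamma sA DA sM h \<Longrightarrow> length bs = h \<Longrightarrow> \<rho> permutes {0..<h} \<Longrightarrow>
   ren \<rho> (\<alpha> (map (\<lambda>i. bs ! \<rho> i) [0..<h])) = psmul sM (of_int (sign \<rho>)) (\<alpha> bs)"
  unfolding Gamma_def mem_Collect_eq by (elim conjE) (erule allE[of _ bs], erule allE[of _ \<rho>], simp)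

definition Wt :: "('f::field_char_0 \<Rightarrow> 'm::comm_ring \<Rightarrow> 'm) \<Rightarrow> nat \<Rightarrow> nat \<Rightarrow>
   ('a list \<Rightarrow> 'm mpoly) \<Rightarrow> ('a list \<Rightarrow> 'm mpoly) \<Rightarrow> 'a list \<Rightarrow> (nat \<Rightarrow> nat) \<Rightarrow> 'm mpoly" where
  "Wt sM h k \<alpha> \<beta> L \<sigma> = psmul sM (of_int (sign \<sigma>) / (fact h * fact k))
          (ren \<sigma> (\<alpha> (List.map (\<lambda>i. L ! \<sigma> i) [0..<h])) *
           ren (\<lambda>j. \<sigma> (h + j)) (\<beta> (List.map (\<lambda>j. L ! \<sigma> (h + j)) [0..<k])))"

lemma wedge_Wt: "wedge sM h k \<alpha> \<beta> L = (\<Sum>\<sigma>\<in>{\<sigma>. \<sigma> permutes {0..<h + k}}. Wt sM h k \<alpha> \<beta> L \<sigma>)"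
  by (simp add: wedge_def Wt_def)

lemma sign_comp_transp:
  assumes "\<sigma> permutes {0..<n::nat}" "a \<noteq> b"
  shows "sign (\<sigma> \<circ> Transposition.transpose a b) = - sign \<sigma>"
proof -
  have "permutation \<sigma>" by (rule permutes_imp_permutation[OF _ assms(1)]) simp
  then have "sign (\<sigma> \<circ> Transposition.transpose a b) = sign \<sigma> * sign (Transposition.transpose a b)"
    by (rule sign_compose) (rule permutation_swap_id)
  then show ?thesis using assms(2) by (simp add: sign_swap_id)
qed

context
  fixes sM :: "'f::field_char_0 \<Rightarrow> 'm::comm_ring \<Rightarrow> 'm"
  assumes VS: "Vector_Spaces.vector_space sM" and MUL: "\<And>c x y. sM c (x * y) = sM c x * y"
begin

lemma psmul_mult2: "P * psmul sM c Q = psmul sM c (P * Q)"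
  using psmul_mult[OF VS MUL, of c Q P] by (simp add: mult.commute)

lemma Wt_inv1:
  assumes A: "\<alpha> \<in> Gamma sA DA sM h" and p: "p < h" and s: "\<sigma> permutes {0..<h + k}"
  shows "Wt sM h k \<alpha> \<beta> L (\<sigma> \<circ> Transposition.transpose 0 p) = Wt sM h k \<alpha> \<beta> L \<sigma>"
proof (cases "p = 0")
  case True then show ?thesis by simp
next
  case False
  let ?t = "Transposition.transpose 0 p"
  let ?b = "List.map (\<lambda>i. L ! \<sigma> i) [0..<h]"
  have tp: "?t permutes {0..<h}" using p by (intro permutes_swap_id) auto
  have sg: "sign (\<sigma> \<circ> ?t) = - sign \<sigma>" using sign_comp_transp[OF s False[symmetric]] .
  have sgt: "sign ?t = -1" using False by (simp add: sign_swap_id)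
  have l1: "List.map (\<lambda>i. L ! (\<sigma> \<circ> ?t) i) [0..<h] = List.map (\<lambda>i. ?b ! ?t i) [0..<h]"
    by (rule nth_equalityI) (use permutes_in_image[OF tp] in auto)
  have r1: "ren (\<sigma> \<circ> ?t) (\<alpha> (List.map (\<lambda>i. L ! (\<sigma> \<circ> ?t) i) [0..<h])) = psmul sM (-1) (ren \<sigma> (\<alpha> ?b))"
    unfolding l1 ren_comp[symmetric] using G_skew[OF A _ tp, of ?b] sgt by (simp add: ren_psmul[OF VS])
  have bt: "(\<sigma> \<circ> ?t) (h + j) = \<sigma> (h + j)" for j using p by (simp add: Transposition.transpose_def)
  show ?thesis
    unfolding Wt_def r1 bt sg psmul_mult[OF VS MUL] psmul_psmul[OF VS] by simp
qed

lemma Wt_inv2: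
  assumes A: "\<alpha> \<in> Gamma sA DA sM h" and B: "\<beta> \<in> Gamma sA DA sM k" and j: "j < k" and s: "\<sigma> permutes {0..<h + k}"
  shows "Wt sM h k \<alpha> \<beta> L (\<sigma> \<circ> Transposition.transpose h (h + j)) = Wt sM h k \<alpha> \<beta> L \<sigma>"
proof (cases "j = 0")
  case True then show ?thesis by simp
next
  case False
  let ?t = "Transposition.transpose h (h + j)"
  let ?t' = "Transposition.transpose 0 j"
  let ?b = "List.map (\<lambda>i. L ! \<sigma> (h + i)) [0..<k]"
  have tp: "?t' permutes {0..<k}" using j by (intro permutes_swap_id) auto
  have sg: "sign (\<sigma> \<circ> ?t) = - sign \<sigma>" using sign_comp_transp[OF s, of h "h + j"] False by simp
  have sgt: "sign ?t' = -1" using False by (simp add: sign_swap_id)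
  have ta: "?t i = i" if "i < h" for i using that by (simp add: Transposition.transpose_def)
  have la: "List.map (\<lambda>i. L ! (\<sigma> \<circ> ?t) i) [0..<h] = List.map (\<lambda>i. L ! \<sigma> i) [0..<h]"
    by (rule nth_equalityI) (auto simp: ta)
  have ra: "ren (\<sigma> \<circ> ?t) (\<alpha> (List.map (\<lambda>i. L ! \<sigma> i) [0..<h])) = ren \<sigma> (\<alpha> (List.map (\<lambda>i. L ! \<sigma> i) [0..<h]))"
  proof (rule ren_cong)
    fix e i assume "e \<in> Poly_Mapping.keys (\<alpha> (List.map (\<lambda>i. L ! \<sigma> i) [0..<h]))" "i \<in> Poly_Mapping.keys e"
    then have "i < h" using G_keys[OF A, of "List.map (\<lambda>i. L ! \<sigma> i) [0..<h]" e] by auto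
    then show "(\<sigma> \<circ> ?t) i = \<sigma> i" by (simp add: ta)
  qed
  have tbi: "?t (h + i) = h + ?t' i" for i by (simp add: Transposition.transpose_def)
  have tb: "(\<lambda>i. (\<sigma> \<circ> ?t) (h + i)) = (\<lambda>i. \<sigma> (h + i)) \<circ> ?t'"
    by (simp add: fun_eq_iff tbi)
  have l1: "List.map (\<lambda>i. L ! (\<sigma> \<circ> ?t) (h + i)) [0..<k] = List.map (\<lambda>i. ?b ! ?t' i) [0..<k]"
    by (rule nth_equalityI) (use permutes_in_image[OF tp] in \<open>auto simp: tbi\<close>)
  have r1: "ren (\<lambda>i. (\<sigma> \<circ> ?t) (h + i)) (\<beta> (List.map (\<lambda>i. L ! (\<sigma> \<circ> ?t) (h + i)) [0..<k])) = psmul sM (-1) (ren (\<lambda>i. \<sigma> (h + i)) (\<beta> ?b))"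
    unfolding l1 tb ren_comp[symmetric] using G_skew[OF B _ tp, of ?b] sgt by (simp add: ren_psmul[OF VS])
  show ?thesis
    unfolding Wt_def r1 sg la ra psmul_mult2 psmul_psmul[OF VS] by simp
qed

end

lemma sum_split_perm:
  fixes g :: "(nat \<Rightarrow> nat) \<Rightarrow> 'b::comm_monoid_add"
  assumes "0 < n"
  shows "(\<Sum>\<sigma>\<in>{\<sigma>. \<sigma> permutes {0..<n}}. g \<sigma>) = (\<Sum>p<n. \<Sum>\<sigma>\<in>{\<sigma>. \<sigma> permutes {0..<n} \<and> \<sigma> p = 0}. g \<sigma>)"
proof -
  let ?P = "{\<sigma>. \<sigma> permutes {0..<n}}"
  have fin: "finite ?P" by (rule finite_permutations) simp
  have "(\<Sum>p<n. \<Sum>\<sigma>\<in>{\<sigma>. \<sigma> permutes {0..<n} \<and> \<sigma> p = 0}. g \<sigma>) = (\<Sum>p<n. \<Sum>\<sigma>\<in>?P. if \<sigma> p = 0 then g \<sigma> else 0)"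
  proof (rule sum.cong[OF refl])
    fix p
    have "{\<sigma>. \<sigma> permutes {0..<n} \<and> \<sigma> p = 0} = {\<sigma>\<in>?P. \<sigma> p = 0}" by auto
    then show "(\<Sum>\<sigma>\<in>{\<sigma>. \<sigma> permutes {0..<n} \<and> \<sigma> p = 0}. g \<sigma>) = (\<Sum>\<sigma>\<in>?P. if \<sigma> p = 0 then g \<sigma> else 0)"
      using sum.inter_filter[OF fin, of g "\<lambda>\<sigma>. \<sigma> p = 0"] by simp
  qed
  also have "\<dots> = (\<Sum>\<sigma>\<in>?P. \<Sum>p<n. if \<sigma> p = 0 then g \<sigma> else 0)" by (rule sum.swap)
  also have "\<dots> = (\<Sum>\<sigma>\<in>?P. g \<sigma>)"
  proof (rule sum.cong[OF refl])
    fix \<sigma> assume "\<sigma> \<in> ?P" then have s: "\<sigma> permutes {0..<n}" by simp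
    have "(\<Sum>p<n. if \<sigma> p = 0 then g \<sigma> else 0) = (\<Sum>p<n. if p = inv \<sigma> 0 then g \<sigma> else 0)"
      by (rule sum.cong[OF refl]) (metis permutes_inv_eq[OF s])
    also have "\<dots> = g \<sigma>"
    proof -
      have "inv \<sigma> 0 \<in> {0..<n}" using permutes_in_image[OF permutes_inv[OF s], of 0] assms by simp
      then show ?thesis by (simp add: sum.delta)
    qed
    finally show "(\<Sum>p<n. if \<sigma> p = 0 then g \<sigma> else 0) = g \<sigma>" .
  qed
  finally show ?thesis by simp
qed

lemma sum_transp:
  fixes g :: "(nat \<Rightarrow> nat) \<Rightarrow> 'b::comm_monoid_add"
  assumes "p0 < n" "p < n" "\<And>\<sigma>. \<sigma> permutes {0..<n} \<Longrightarrow> g (\<sigma> \<circ> Transposition.transpose p0 p) = g \<sigma>"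
  shows "(\<Sum>\<sigma>\<in>{\<sigma>. \<sigma> permutes {0..<n} \<and> \<sigma> p = 0}. g \<sigma>) = (\<Sum>\<sigma>\<in>{\<sigma>. \<sigma> permutes {0..<n} \<and> \<sigma> p0 = 0}. g \<sigma>)"
proof -
  let ?t = "Transposition.transpose p0 p"
  have tp: "?t permutes {0..<n}" using assms by (intro permutes_swap_id) auto
  have tt: "\<sigma> \<circ> ?t \<circ> ?t = \<sigma>" for \<sigma> :: "nat \<Rightarrow> nat"
    by (simp add: comp_assoc transpose_comp_involutory)
  show ?thesis
    by (rule sum.reindex_bij_witness[where i="\<lambda>\<sigma>. \<sigma> \<circ> ?t" and j="\<lambda>\<sigma>. \<sigma> \<circ> ?t"])
       (auto simp: tt assms(3) intro: permutes_compose[OF tp])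
qed

lemma sum_split_add: "(\<Sum>p<h + (k::nat). f p) = (\<Sum>p<h. f p) + (\<Sum>j<k. f (h + j))"
  by (induction k) (auto simp: add.assoc)

lemma sumA:
  "(\<Sum>\<sigma>\<in>{\<sigma>. \<sigma> permutes {0..<Suc m} \<and> \<sigma> 0 = 0}. g \<sigma>) = (\<Sum>\<tau>\<in>{\<tau>. \<tau> permutes {0..<m}}. g (shiftp \<tau>))"
  by (rule sum.reindex_bij_witness[where i=shiftp and j="unshift m"])
     (auto simp: shiftp_unshift unshift_shiftp unshift_perm shiftp_perm)

lemma sumB:
  assumes "h \<le> m"
  shows "(\<Sum>\<sigma>\<in>{\<sigma>. \<sigma> permutes {0..<Suc m} \<and> \<sigma> h = 0}. g \<sigma>) = (\<Sum>\<tau>\<in>{\<tau>. \<tau> permutes {0..<m}}. g (shiftp \<tau> \<circ> cyc h))"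
proof -
  have c: "cyc h permutes {0..<Suc m}" by (rule permutes_subset[OF cyc_perm(1)]) (use assms in auto)
  have ci: "inv (cyc h) permutes {0..<Suc m}" by (rule permutes_inv[OF c])
  have c0: "inv (cyc h) 0 = h" using permutes_inv_eq[OF c] by (simp add: cyc_def)
  have o1: "inv (cyc h) \<circ> cyc h = id" "cyc h \<circ> inv (cyc h) = id" using permutes_inv_o[OF c] by auto
  have A: "\<sigma> \<circ> inv (cyc h) permutes {0..<Suc m} \<and> (\<sigma> \<circ> inv (cyc h)) 0 = 0" if "\<sigma> permutes {0..<Suc m}" "\<sigma> h = 0" for \<sigma>
    using that permutes_compose[OF ci that(1)] c0 by simp
  show ?thesis
  proof (rule sum.reindex_bij_witness[where i="\<lambda>\<tau>. shiftp \<tau> \<circ> cyc h" and j="\<lambda>\<sigma>. unshift m (\<sigma> \<circ> inv (cyc h))"])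
    fix \<sigma> assume "\<sigma> \<in> {\<sigma>. \<sigma> permutes {0..<Suc m} \<and> \<sigma> h = 0}"
    then have s: "\<sigma> permutes {0..<Suc m}" "\<sigma> h = 0" by auto
    have e: "shiftp (unshift m (\<sigma> \<circ> inv (cyc h))) = \<sigma> \<circ> inv (cyc h)"
      by (rule shiftp_unshift[OF A[OF s, THEN conjunct1] A[OF s, THEN conjunct2]])
    show "shiftp (unshift m (\<sigma> \<circ> inv (cyc h))) \<circ> cyc h = \<sigma>"
      unfolding e comp_assoc o1 by simp
    show "unshift m (\<sigma> \<circ> inv (cyc h)) \<in> {\<tau>. \<tau> permutes {0..<m}}"
      using unshift_perm[OF A[OF s, THEN conjunct1] A[OF s, THEN conjunct2]] by (simp only: mem_Collect_eq)
    show "g (shiftp (unshift m (\<sigma> \<circ> inv (cyc h))) \<circ> cyc h) = g \<sigma>"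
      unfolding e comp_assoc o1 by simp
  next
    fix \<tau> assume "\<tau> \<in> {\<tau>. \<tau> permutes {0..<m}}"
    then have t: "\<tau> permutes {0..<m}" by simp
    show "unshift m (shiftp \<tau> \<circ> cyc h \<circ> inv (cyc h)) = \<tau>"
      unfolding comp_assoc o1 using unshift_shiftp[OF t] by simp
    show "shiftp \<tau> \<circ> cyc h \<in> {\<sigma>. \<sigma> permutes {0..<Suc m} \<and> \<sigma> h = 0}"
      using permutes_compose[OF c shiftp_perm(1)[OF t]] by (simp add: cyc_def)
  qed
qed


context
  fixes sM :: "'f::field_char_0 \<Rightarrow> 'm::comm_ring \<Rightarrow> 'm"
  assumes VS: "Vector_Spaces.vector_space sM" and MUL: "\<And>c x y. sM c (x * y) = sM c x * y"
begin

lemma termA: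
  assumes t: "\<tau> permutes {0..<m}" and h: "0 < h"
  shows "contract \<phi> (Wt sM h k \<alpha> \<beta> (a # as) (shiftp \<tau>)) =
    psmul sM (of_int (sign \<tau>) / (fact h * fact k))
      (ren \<tau> (contract \<phi> (\<alpha> (a # List.map (\<lambda>i. as ! \<tau> i) [0..<h - 1]))) *
       ren (\<lambda>j. \<tau> (h - 1 + j)) (\<beta> (List.map (\<lambda>j. as ! \<tau> (h - 1 + j)) [0..<k])))"
proof -
  have la: "List.map (\<lambda>i. (a # as) ! shiftp \<tau> i) [0..<h] = a # List.map (\<lambda>i. as ! \<tau> i) [0..<h - 1]"
  proof (rule nth_equalityI)
    fix i assume "i < length (List.map (\<lambda>i. (a # as) ! shiftp \<tau> i) [0..<h])"
    then show "List.map (\<lambda>i. (a # as) ! shiftp \<tau> i) [0..<h] ! i = (a # List.map (\<lambda>i. as ! \<tau> i) [0..<h - 1]) ! i"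
      by (cases i) auto
  qed (use h in auto)
  have sb: "shiftp \<tau> (h + j) = Suc (\<tau> (h - 1 + j))" for j
    using h by (cases h) auto
  have fb: "(\<lambda>j. shiftp \<tau> (h + j)) = (\<lambda>j. Suc (\<tau> (h - 1 + j)))" by (simp add: sb)
  have lb: "List.map (\<lambda>j. (a # as) ! shiftp \<tau> (h + j)) [0..<k] = List.map (\<lambda>j. as ! \<tau> (h - 1 + j)) [0..<k]"
    by (simp add: sb)
  have "contract \<phi> (Wt sM h k \<alpha> \<beta> (a # as) (shiftp \<tau>)) =
     psmul sM (of_int (sign \<tau>) / (fact h * fact k))
      (contract \<phi> (ren (shiftp \<tau>) (\<alpha> (a # List.map (\<lambda>i. as ! \<tau> i) [0..<h - 1])) *
        ren (\<lambda>j. Suc (\<tau> (h - 1 + j))) (\<beta> (List.map (\<lambda>j. as ! \<tau> (h - 1 + j)) [0..<k]))))"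
    unfolding Wt_def shiftp_perm(2)[OF t] la lb fb contract_psmul[OF VS MUL] ..
  also have "\<dots> = psmul sM (of_int (sign \<tau>) / (fact h * fact k))
      (contract \<phi> (ren (shiftp \<tau>) (\<alpha> (a # List.map (\<lambda>i. as ! \<tau> i) [0..<h - 1]))) *
        ren (\<lambda>j. \<tau> (h - 1 + j)) (\<beta> (List.map (\<lambda>j. as ! \<tau> (h - 1 + j)) [0..<k])))"
    by (subst contract_mult_ren) (rule refl)
  also have "\<dots> = psmul sM (of_int (sign \<tau>) / (fact h * fact k))
      (ren \<tau> (contract \<phi> (\<alpha> (a # List.map (\<lambda>i. as ! \<tau> i) [0..<h - 1]))) *
       ren (\<lambda>j. \<tau> (h - 1 + j)) (\<beta> (List.map (\<lambda>j. as ! \<tau> (h - 1 + j)) [0..<k])))"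
    by (subst contract_ren[of "shiftp \<tau>" \<tau>]) auto
  finally show ?thesis .
qed

lemma termB:
  assumes t: "\<tau> permutes {0..<m}" and k: "0 < k" and hm: "h \<le> m" and A: "\<alpha> \<in> Gamma sA DA sM h"
  shows "contract \<phi> (Wt sM h k \<alpha> \<beta> (a # as) (shiftp \<tau> \<circ> cyc h)) =
    psmul sM ((-1) ^ h * of_int (sign \<tau>) / (fact h * fact k))
      (ren \<tau> (\<alpha> (List.map (\<lambda>i. as ! \<tau> i) [0..<h])) *
       ren (\<lambda>j. \<tau> (h + j)) (contract \<phi> (\<beta> (a # List.map (\<lambda>j. as ! \<tau> (h + j)) [0..<k - 1]))))"
proof -
  let ?s = "shiftp \<tau> \<circ> cyc h"
  have sa: "?s i = Suc (\<tau> i)" if "i < h" for i using that by (simp add: cyc_def)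
  have sb: "(\<lambda>j. ?s (h + j)) = shiftp (\<lambda>j. \<tau> (h + j))"
  proof
    fix j show "?s (h + j) = shiftp (\<lambda>j. \<tau> (h + j)) j"
      by (cases j) (auto simp: cyc_def)
  qed
  have sgn: "sign ?s = sign \<tau> * (-1) ^ h"
  proof -
    have c: "cyc h permutes {0..<Suc m}" by (rule permutes_subset[OF cyc_perm(1)]) (use hm in auto)
    have "sign ?s = sign (shiftp \<tau>) * sign (cyc h)"
      by (rule sign_compose; rule permutes_imp_permutation[OF _ shiftp_perm(1)[OF t]] permutes_imp_permutation[OF _ c]; simp)
    then show ?thesis using shiftp_perm(2)[OF t] cyc_perm(2)[of h] by simp
  qed
  have la: "List.map (\<lambda>i. (a # as) ! ?s i) [0..<h] = List.map (\<lambda>i. as ! \<tau> i) [0..<h]"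
    by (rule nth_equalityI) (auto simp: cyc_def)
  have ra: "ren ?s (\<alpha> (List.map (\<lambda>i. as ! \<tau> i) [0..<h])) = ren (\<lambda>i. Suc (\<tau> i)) (\<alpha> (List.map (\<lambda>i. as ! \<tau> i) [0..<h]))"
  proof (rule ren_cong)
    fix e i assume "e \<in> Poly_Mapping.keys (\<alpha> (List.map (\<lambda>i. as ! \<tau> i) [0..<h]))" "i \<in> Poly_Mapping.keys e"
    then have "i < h" using G_keys[OF A, of "List.map (\<lambda>i. as ! \<tau> i) [0..<h]" e] by auto
    then show "?s i = Suc (\<tau> i)" by (rule sa)
  qed
  have lb: "List.map (\<lambda>j. (a # as) ! ?s (h + j)) [0..<k] = a # List.map (\<lambda>j. as ! \<tau> (h + j)) [0..<k - 1]"
  proof (rule nth_equalityI)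
    fix i assume "i < length (List.map (\<lambda>j. (a # as) ! ?s (h + j)) [0..<k])"
    then show "List.map (\<lambda>j. (a # as) ! ?s (h + j)) [0..<k] ! i = (a # List.map (\<lambda>j. as ! \<tau> (h + j)) [0..<k - 1]) ! i"
      by (cases i) (auto simp: cyc_def)
  qed (use k in auto)
  have "contract \<phi> (Wt sM h k \<alpha> \<beta> (a # as) ?s) =
    psmul sM (of_int (sign \<tau> * (-1) ^ h) / (fact h * fact k))
      (contract \<phi> (ren (\<lambda>i. Suc (\<tau> i)) (\<alpha> (List.map (\<lambda>i. as ! \<tau> i) [0..<h])) *
       ren (shiftp (\<lambda>j. \<tau> (h + j))) (\<beta> (a # List.map (\<lambda>j. as ! \<tau> (h + j)) [0..<k - 1]))))"
    unfolding Wt_def sgn la ra lb sb contract_psmul[OF VS MUL] ..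
  also have "\<dots> = psmul sM (of_int (sign \<tau> * (-1) ^ h) / (fact h * fact k))
      (ren \<tau> (\<alpha> (List.map (\<lambda>i. as ! \<tau> i) [0..<h])) *
       contract \<phi> (ren (shiftp (\<lambda>j. \<tau> (h + j))) (\<beta> (a # List.map (\<lambda>j. as ! \<tau> (h + j)) [0..<k - 1]))))"
    by (subst contract_mult_ren') (rule refl)
  also have "\<dots> = psmul sM (of_int (sign \<tau> * (-1) ^ h) / (fact h * fact k))
      (ren \<tau> (\<alpha> (List.map (\<lambda>i. as ! \<tau> i) [0..<h])) *
       ren (\<lambda>j. \<tau> (h + j)) (contract \<phi> (\<beta> (a # List.map (\<lambda>j. as ! \<tau> (h + j)) [0..<k - 1]))))"
    by (subst contract_ren[of "shiftp (\<lambda>j. \<tau> (h + j))" "\<lambda>j. \<tau> (h + j)"]) auto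
  finally show ?thesis by (simp add: mult.commute)
qed


lemma fact_scal:
  assumes "0 < h"
  shows "of_nat h * (c / (fact h * fact k)) = c / (fact (h - 1) * fact k :: 'f::field_char_0)"
proof -
  have "fact h = (of_nat h * fact (h - 1) :: 'f)" using assms by (rule fact_reduce)
  moreover have "(of_nat h :: 'f) \<noteq> 0" using assms by simp
  moreover have "(fact (h - 1) :: 'f) \<noteq> 0" "(fact k :: 'f) \<noteq> 0" by simp_all
  ultimately show ?thesis by (simp add: field_simps)
qed

lemma core:
  assumes A: "\<alpha> \<in> Gamma sA DA sM h" and B: "\<beta> \<in> Gamma sA DA sM k" and hk: "h + k = Suc (length as)"
  shows "contract \<phi> (wedge sM h k \<alpha> \<beta> (a # as)) =
    (if h = 0 then 0 else wedge sM (h - 1) k (\<lambda>bs. contract \<phi> (\<alpha> (a # bs))) \<beta> as) +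
    (if k = 0 then 0 else psmul sM ((-1) ^ h) (wedge sM h (k - 1) \<alpha> (\<lambda>bs. contract \<phi> (\<beta> (a # bs))) as))"
proof -
  define m where "m = length as"
  define W where "W = Wt sM h k \<alpha> \<beta> (a # as)"
  define XA where "XA = (\<Sum>\<sigma>\<in>{\<sigma>. \<sigma> permutes {0..<h + k} \<and> \<sigma> 0 = 0}. W \<sigma>)"
  define XB where "XB = (\<Sum>\<sigma>\<in>{\<sigma>. \<sigma> permutes {0..<h + k} \<and> \<sigma> h = 0}. W \<sigma>)"
  have hk': "h + k = Suc m" using hk by (simp add: m_def)
  have "wedge sM h k \<alpha> \<beta> (a # as) = (\<Sum>\<sigma>\<in>{\<sigma>. \<sigma> permutes {0..<h + k}}. W \<sigma>)"
    by (simp add: wedge_Wt W_def)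
  also have "\<dots> = (\<Sum>p<h + k. \<Sum>\<sigma>\<in>{\<sigma>. \<sigma> permutes {0..<h + k} \<and> \<sigma> p = 0}. W \<sigma>)"
    by (rule sum_split_perm) (simp add: hk')
  also have "\<dots> = (\<Sum>p<h. XA) + (\<Sum>j<k. XB)"
  proof -
    have "(\<Sum>p<h. \<Sum>\<sigma>\<in>{\<sigma>. \<sigma> permutes {0..<h + k} \<and> \<sigma> p = 0}. W \<sigma>) = (\<Sum>p<h. XA)"
    proof (rule sum.cong[OF refl])
      fix p assume "p \<in> {..<h}"
      then show "(\<Sum>\<sigma>\<in>{\<sigma>. \<sigma> permutes {0..<h + k} \<and> \<sigma> p = 0}. W \<sigma>) = XA"
        unfolding XA_def W_def
        by (intro sum_transp) (auto intro: Wt_inv1[OF VS MUL A])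
    qed
    moreover have "(\<Sum>j<k. \<Sum>\<sigma>\<in>{\<sigma>. \<sigma> permutes {0..<h + k} \<and> \<sigma> (h + j) = 0}. W \<sigma>) = (\<Sum>j<k. XB)"
    proof (rule sum.cong[OF refl])
      fix j assume "j \<in> {..<k}"
      then show "(\<Sum>\<sigma>\<in>{\<sigma>. \<sigma> permutes {0..<h + k} \<and> \<sigma> (h + j) = 0}. W \<sigma>) = XB"
        unfolding XB_def W_def
        by (intro sum_transp) (auto intro: Wt_inv2[OF VS MUL A B])
    qed
    ultimately show ?thesis by (simp add: sum_split_add)
  qed
  finally have w: "wedge sM h k \<alpha> \<beta> (a # as) = (\<Sum>p<h. XA) + (\<Sum>j<k. XB)" .
  have partA: "(\<Sum>p<h. contract \<phi> XA) = (if h = 0 then 0 else wedge sM (h - 1) k (\<lambda>bs. contract \<phi> (\<alpha> (a # bs))) \<beta> as)"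
  proof (cases "h = 0")
    case False
    then have h0: "0 < h" by simp
    define Z where "Z = (\<lambda>\<tau>. ren \<tau> (contract \<phi> (\<alpha> (a # List.map (\<lambda>i. as ! \<tau> i) [0..<h - 1]))) *
       ren (\<lambda>j. \<tau> (h - 1 + j)) (\<beta> (List.map (\<lambda>j. as ! \<tau> (h - 1 + j)) [0..<k])))"
    have "contract \<phi> XA = (\<Sum>\<tau>\<in>{\<tau>. \<tau> permutes {0..<m}}. contract \<phi> (W (shiftp \<tau>)))"
      unfolding XA_def hk' sumA contract_sum ..
    also have "\<dots> = (\<Sum>\<tau>\<in>{\<tau>. \<tau> permutes {0..<m}}. psmul sM (of_int (sign \<tau>) / (fact h * fact k)) (Z \<tau>))"
      by (rule sum.cong[OF refl]) (simp add: W_def Z_def termA[OF _ h0])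
    finally have cA: "contract \<phi> XA = \<dots>" .
    have "(\<Sum>p<h. contract \<phi> XA) = (\<Sum>\<tau>\<in>{\<tau>. \<tau> permutes {0..<m}}. \<Sum>p<h. psmul sM (of_int (sign \<tau>) / (fact h * fact k)) (Z \<tau>))"
      unfolding cA by (rule sum.swap)
    also have "\<dots> = (\<Sum>\<tau>\<in>{\<tau>. \<tau> permutes {0..<m}}. psmul sM (of_int (sign \<tau>) / (fact (h - 1) * fact k)) (Z \<tau>))"
    proof (rule sum.cong[OF refl])
      fix \<tau> :: "nat \<Rightarrow> nat"
      show "(\<Sum>p<h. psmul sM (of_int (sign \<tau>) / (fact h * fact k)) (Z \<tau>)) = psmul sM (of_int (sign \<tau>) / (fact (h - 1) * fact k)) (Z \<tau>)"
        unfolding psmul_sum_left[OF VS, symmetric] sum_constant card_lessThan fact_scal[OF h0] by (rule refl)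
    qed
    also have "\<dots> = wedge sM (h - 1) k (\<lambda>bs. contract \<phi> (\<alpha> (a # bs))) \<beta> as"
    proof -
      have "h - 1 + k = m" using hk' h0 by simp
      then show ?thesis by (simp add: wedge_Wt Wt_def Z_def)
    qed
    finally show ?thesis using False by simp
  qed simp
  have partB: "(\<Sum>j<k. contract \<phi> XB) = (if k = 0 then 0 else psmul sM ((-1) ^ h) (wedge sM h (k - 1) \<alpha> (\<lambda>bs. contract \<phi> (\<beta> (a # bs))) as))"
  proof (cases "k = 0")
    case False
    then have k0: "0 < k" by simp
    have hm: "h \<le> m" using hk' k0 by simp
    define Z where "Z = (\<lambda>\<tau>. ren \<tau> (\<alpha> (List.map (\<lambda>i. as ! \<tau> i) [0..<h])) *
       ren (\<lambda>j. \<tau> (h + j)) (contract \<phi> (\<beta> (a # List.map (\<lambda>j. as ! \<tau> (h + j)) [0..<k - 1]))))"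
    have "contract \<phi> XB = (\<Sum>\<tau>\<in>{\<tau>. \<tau> permutes {0..<m}}. contract \<phi> (W (shiftp \<tau> \<circ> cyc h)))"
      unfolding XB_def hk' sumB[OF hm] contract_sum ..
    also have "\<dots> = (\<Sum>\<tau>\<in>{\<tau>. \<tau> permutes {0..<m}}. psmul sM ((-1) ^ h * of_int (sign \<tau>) / (fact h * fact k)) (Z \<tau>))"
      by (rule sum.cong[OF refl]) (simp add: W_def Z_def termB[OF _ k0 hm A])
    finally have cB: "contract \<phi> XB = \<dots>" .
    have "(\<Sum>j<k. contract \<phi> XB) = (\<Sum>\<tau>\<in>{\<tau>. \<tau> permutes {0..<m}}. \<Sum>j<k. psmul sM ((-1) ^ h * of_int (sign \<tau>) / (fact h * fact k)) (Z \<tau>))"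
      unfolding cB by (rule sum.swap)
    also have "\<dots> = (\<Sum>\<tau>\<in>{\<tau>. \<tau> permutes {0..<m}}. psmul sM ((-1) ^ h) (psmul sM (of_int (sign \<tau>) / (fact h * fact (k - 1))) (Z \<tau>)))"
    proof (rule sum.cong[OF refl])
      fix \<tau> :: "nat \<Rightarrow> nat"
      have e: "of_nat k * ((-1) ^ h * of_int (sign \<tau>) / (fact h * fact k)) = ((-1) ^ h * (of_int (sign \<tau>) / (fact h * fact (k - 1))) :: 'f)"
        using fact_scal[OF k0, of "(-1) ^ h * of_int (sign \<tau>)" h] by (simp add: mult.commute)
      show "(\<Sum>j<k. psmul sM ((-1) ^ h * of_int (sign \<tau>) / (fact h * fact k)) (Z \<tau>)) = psmul sM ((-1) ^ h) (psmul sM (of_int (sign \<tau>) / (fact h * fact (k - 1))) (Z \<tau>))"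
        unfolding psmul_sum_left[OF VS, symmetric] psmul_psmul[OF VS] sum_constant card_lessThan e by (rule refl)
    qed
    also have "\<dots> = psmul sM ((-1) ^ h) (wedge sM h (k - 1) \<alpha> (\<lambda>bs. contract \<phi> (\<beta> (a # bs))) as)"
    proof -
      have "h + (k - 1) = m" using hk' k0 by simp
      then show ?thesis by (simp add: wedge_Wt Wt_def Z_def psmul_sum[OF VS])
    qed
    finally show ?thesis using False by simp
  qed simp
  show ?thesis unfolding w contract_add contract_sum partA partB ..
qed


lemma wedge_add1: "wedge sM h k (\<lambda>bs. f bs + g bs) \<beta> L = wedge sM h k f \<beta> L + wedge sM h k g \<beta> L"
  by (simp add: wedge_def ren_add distrib_right psmul_add[OF VS] sum.distrib)
lemma wedge_zero1: "wedge sM h k (\<lambda>bs. 0) \<beta> L = 0"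
  by (simp add: wedge_def psmul_zero[OF VS])
lemma wedge_add2: "wedge sM h k \<alpha> (\<lambda>bs. f bs + g bs) L = wedge sM h k \<alpha> f L + wedge sM h k \<alpha> g L"
  by (simp add: wedge_def ren_add distrib_left psmul_add[OF VS] sum.distrib)
lemma wedge_zero2: "wedge sM h k \<alpha> (\<lambda>bs. 0) L = 0"
  by (simp add: wedge_def psmul_zero[OF VS])

lemma core_list:
  assumes A: "\<alpha> \<in> Gamma sA DA sM h" and B: "\<beta> \<in> Gamma sA DA sM k" and hk: "h + k = Suc (length as)"
  shows "sum_list (List.map (\<lambda>(a, \<phi>). contract \<phi> (wedge sM h k \<alpha> \<beta> (a # as))) \<xi>) =
    (if h = 0 then 0 else wedge sM (h - 1) k (\<lambda>bs. sum_list (List.map (\<lambda>(a, \<phi>). contract \<phi> (\<alpha> (a # bs))) \<xi>)) \<beta> as) +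
    (if k = 0 then 0 else psmul sM ((-1) ^ h) (wedge sM h (k - 1) \<alpha> (\<lambda>bs. sum_list (List.map (\<lambda>(a, \<phi>). contract \<phi> (\<beta> (a # bs))) \<xi>)) as))"
proof (induction \<xi>)
  case Nil
  then show ?case by (simp add: wedge_zero1 wedge_zero2 psmul_zero[OF VS])
next
  case (Cons x \<xi>)
  obtain a \<phi> where x: "x = (a, \<phi>)" by (cases x)
  show ?case
    unfolding x list.map sum_list.Cons prod.case Cons.IH core[OF A B hk, of \<phi> a] wedge_add1 wedge_add2 psmul_add[OF VS]
    by (simp add: algebra_simps)
qed

end

theorem proposition3p25:
  fixes sA :: "'f::field_char_0 \<Rightarrow> 'a::ab_group_add \<Rightarrow> 'a"
    and DA :: "'a \<Rightarrow> 'a"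
    and br :: "'a \<Rightarrow> 'a \<Rightarrow> (nat \<Rightarrow>\<^sub>0 'a)"
    and sM :: "'f \<Rightarrow> 'm::comm_ring \<Rightarrow> 'm"
    and DM :: "'m \<Rightarrow> 'm"
    and act :: "'a \<Rightarrow> 'm \<Rightarrow> (nat \<Rightarrow>\<^sub>0 'm)"
    and \<xi> :: "('a \<times> (nat \<Rightarrow> 'm)) list"
    and \<alpha> \<beta> :: "'a list \<Rightarrow> 'm mpoly"
    and h k :: nat
    and as :: "'a list"
  assumes "lie_conformal_algebra sA DA br"
    and "lca_module sA DA br sM DM act"
    and "derivation_product sM DM act"
    and "\<alpha> \<in> Gamma sA DA sM h"
    and "\<beta> \<in> Gamma sA DA sM k"
    and "Suc (length as) = h + k"
  shows "iota (h + k) \<xi> (wedge sM h k \<alpha> \<beta>) as =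
           (if h = 0 then 0 else wedge sM (h - 1) k (iota h \<xi> \<alpha>) \<beta> as) +
           (if k = 0 then 0
            else if even h then wedge sM h (k - 1) \<alpha> (iota k \<xi> \<beta>) as
            else - wedge sM h (k - 1) \<alpha> (iota k \<xi> \<beta>) as)"
proof -
  have VS: "Vector_Spaces.vector_space sM" using assms(2) unfolding lca_module_def by blast
  have MUL: "\<And>c x y. sM c (x * y) = sM c x * y" using assms(3) unfolding derivation_product_def by blast
  have L: "iota (h + k) \<xi> (wedge sM h k \<alpha> \<beta>) as = sum_list (List.map (\<lambda>(a, \<phi>). contract \<phi> (wedge sM h k \<alpha> \<beta> (a # as))) \<xi>)"
  proof -
    have "h + k \<noteq> 0" using assms(6) by linarith
    then show ?thesis unfolding iota_def by (simp only: if_False)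
  qed
  have ih: "h \<noteq> 0 \<Longrightarrow> iota h \<xi> \<alpha> = (\<lambda>bs. sum_list (List.map (\<lambda>(a, \<phi>). contract \<phi> (\<alpha> (a # bs))) \<xi>))"
    by (simp add: iota_def fun_eq_iff)
  have ik: "k \<noteq> 0 \<Longrightarrow> iota k \<xi> \<beta> = (\<lambda>bs. sum_list (List.map (\<lambda>(a, \<phi>). contract \<phi> (\<beta> (a # bs))) \<xi>))"
    by (simp add: iota_def fun_eq_iff)
  have sg: "psmul sM ((-1) ^ h) X = (if even h then X else - X)" for X
    by (simp add: psmul_one[OF VS] psmul_neg[OF VS])
  show ?thesis
    unfolding L core_list[OF VS MUL assms(4,5) assms(6)[symmetric]]
    by (cases "h = 0"; cases "k = 0") (simp_all add: ih ik sg psmul_one[OF VS])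
qed

end
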